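(* For every integer $n\ge1$ and every $u\in V$, the normalizing factor satisfies $Z_u<\dfrac{1}{\ln(n+1)}$.
   Context: For an integer $n\ge1$, the $n$-octahedral graph $G'_n=(V,E')$ is the undirected graph with vertex set $V=\{u\in\mathbb{Z}^3:|u_1|+|u_2|+|u_3|=n\}$ and edge set $E'=\{\{v,w\}\subset V: v\neq w,\ |v_i-w_i|\le 1 \text{ for all } i=1,2,3\}$. For $u,v\in V$, $d_{uv}$ denotes the shortest-path (number of edges) distance between $u$ and $v$ in $G'_n$. For $u\in V$, $Z_u=\left(\sum_{w\in V\setminus\{u\}} d_{uw}^{-2}\right)^{-1}$. *)

theory Defs
  imports "HOL-Analysis.Analysis"
begin

type_synonym pt = "int \<times> int \<times> int"

definition oct_V :: "nat \<Rightarrow> pt set" where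
  "oct_V n = {(a, b, c). \<bar>a\<bar> + \<bar>b\<bar> + \<bar>c\<bar> = int n}"

definition oct_adj :: "nat \<Rightarrow> pt \<Rightarrow> pt \<Rightarrow> bool" where
  "oct_adj n v w \<longleftrightarrow> v \<in> oct_V n \<and> w \<in> oct_V n \<and> v \<noteq> w \<and>
     \<bar>fst v - fst w\<bar> \<le> 1 \<and> \<bar>fst (snd v) - fst (snd w)\<bar> \<le> 1 \<and>
     \<bar>snd (snd v) - snd (snd w)\<bar> \<le> 1"

inductive oct_walk :: "nat \<Rightarrow> nat \<Rightarrow> pt \<Rightarrow> pt \<Rightarrow> bool" for n where
  nil: "v \<in> oct_V n \<Longrightarrow> oct_walk n 0 v v"
| step: "oct_adj n v x \<Longrightarrow> oct_walk n k x w \<Longrightarrow> oct_walk n (Suc k) v w"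

definition oct_dist :: "nat \<Rightarrow> pt \<Rightarrow> pt \<Rightarrow> nat" where
  "oct_dist n v w = (LEAST k. oct_walk n k v w)"

definition oct_Z :: "nat \<Rightarrow> pt \<Rightarrow> real" where
  "oct_Z n u = inverse (\<Sum>w\<in>oct_V n - {u}. 1 / (real (oct_dist n u w))^2)"

end

theory Submission imports Defs
begin


definition sg :: "int \<Rightarrow> int" where "sg x = (if x < 0 then -1 else 1)"
lemma sg_abs[simp]: "\<bar>sg x * y\<bar> = \<bar>y\<bar>" by (simp add: sg_def abs_mult)
lemma sg_id[simp]: "sg x * \<bar>x\<bar> = x" by (simp add: sg_def)
lemma sg_diff[simp]: "\<bar>sg x * y - sg x * z\<bar> = \<bar>y - z\<bar>"
  by (metis right_diff_distrib sg_abs)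
lemma sg_abs1[simp]: "\<bar>sg x\<bar> = 1" by (simp add: sg_def)
lemma sg_nz[simp]: "sg x \<noteq> 0" by (simp add: sg_def)
lemma sg_eq[simp]: "sg x * y = sg x * z \<longleftrightarrow> y = z" by (simp add: sg_def)

lemma walk_V: "oct_walk n k v w \<Longrightarrow> v \<in> oct_V n \<and> w \<in> oct_V n"
  by (induction rule: oct_walk.induct) (auto simp: oct_adj_def)

lemma walk_snoc: "oct_walk n k v x \<Longrightarrow> oct_adj n x w \<Longrightarrow> oct_walk n (Suc k) v w"
proof (induction rule: oct_walk.induct)
  case (nil v)
  then show ?case by (meson oct_adj_def oct_walk.nil oct_walk.step)
next
  case (step v y k w')
  then show ?case by (meson oct_walk.step)
qed

lemma dist_le: "oct_walk n k u w \<Longrightarrow> oct_dist n u w \<le> k"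
  unfolding oct_dist_def by (rule Least_le)

lemma dist_pos: assumes "oct_walk n k u w" "u \<noteq> w" shows "1 \<le> oct_dist n u w"
proof -
  have "oct_walk n (oct_dist n u w) u w" unfolding oct_dist_def by (rule LeastI[where P="\<lambda>k. oct_walk n k u w", OF assms(1)])
  moreover have "\<not> oct_walk n 0 u w" using assms(2) by (auto elim: oct_walk.cases)
  ultimately show ?thesis by (cases "oct_dist n u w") auto
qed

lemma g_bound: assumes "oct_walk n k u w" "u \<noteq> w"
  shows "1 / (real k)^2 \<le> 1 / (real (oct_dist n u w))^2"
proof -
  have "1 \<le> oct_dist n u w" "oct_dist n u w \<le> k" using dist_pos dist_le assms by auto
  then show ?thesis by (simp add: frac_le power_mono)
qed

definition famA :: "int \<Rightarrow> int \<Rightarrow> int \<Rightarrow> nat \<times> nat \<Rightarrow> pt" where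
 "famA a b c sp = (sg a * (\<bar>a\<bar> - int (fst sp)), sg b * (\<bar>b\<bar> + int (snd sp)), sg c * (\<bar>c\<bar> + int (fst sp) - int (snd sp)))"
definition famB :: "int \<Rightarrow> int \<Rightarrow> int \<Rightarrow> nat \<times> nat \<Rightarrow> pt" where
 "famB a b c sp = (sg a * (\<bar>a\<bar> + int (fst sp) - int (snd sp)), sg b * (\<bar>b\<bar> - int (fst sp)), sg c * (\<bar>c\<bar> + int (snd sp)))"
definition famC :: "int \<Rightarrow> int \<Rightarrow> int \<Rightarrow> nat \<times> nat \<Rightarrow> pt" where
 "famC a b c sp = (sg a * (\<bar>a\<bar> + int (snd sp)), sg b * (\<bar>b\<bar> + int (fst sp) - int (snd sp)), sg c * (\<bar>c\<bar> - int (fst sp)))"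

lemma famA_walk:
  assumes u: "(a,b,c) \<in> oct_V n"
  shows "s \<le> nat \<bar>a\<bar> \<Longrightarrow> p \<le> s \<Longrightarrow> oct_walk n s (a,b,c) (famA a b c (s,p))"
proof (induction s arbitrary: p)
  case 0
  then show ?case using u by (simp add: famA_def oct_walk.nil)
next
  case (Suc s)
  have inV: "\<And>q. q \<le> Suc s \<Longrightarrow> famA a b c (Suc s, q) \<in> oct_V n" "\<And>q. q \<le> s \<Longrightarrow> famA a b c (s, q) \<in> oct_V n"
    using u Suc.prems by (auto simp: famA_def oct_V_def)
  show ?case
  proof (cases p)
    case 0
    have "oct_adj n (famA a b c (s,0)) (famA a b c (Suc s,0))"
      using inV[of 0] unfolding oct_adj_def by (auto simp: famA_def)
    then show ?thesis using Suc walk_snoc 0 by fastforce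
  next
    case (Suc q)
    have "oct_adj n (famA a b c (s,q)) (famA a b c (Suc s,p))"
      using inV(1)[of p] inV(2)[of q] Suc.prems Suc unfolding oct_adj_def famA_def by (simp add: algebra_simps)
    then show ?thesis using Suc.IH[of q] Suc.prems Suc walk_snoc by fastforce
  qed
qed

lemma famB_walk:
  assumes u: "(a,b,c) \<in> oct_V n"
  shows "s \<le> nat \<bar>b\<bar> \<Longrightarrow> p \<le> s \<Longrightarrow> oct_walk n s (a,b,c) (famB a b c (s,p))"
proof (induction s arbitrary: p)
  case 0
  then show ?case using u by (simp add: famB_def oct_walk.nil)
next
  case (Suc s)
  have inV: "\<And>q. q \<le> Suc s \<Longrightarrow> famB a b c (Suc s, q) \<in> oct_V n" "\<And>q. q \<le> s \<Longrightarrow> famB a b c (s, q) \<in> oct_V n"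
    using u Suc.prems by (auto simp: famB_def oct_V_def)
  show ?case
  proof (cases p)
    case 0
    have "oct_adj n (famB a b c (s,0)) (famB a b c (Suc s,0))"
      using inV[of 0] unfolding oct_adj_def by (auto simp: famB_def)
    then show ?thesis using Suc walk_snoc 0 by fastforce
  next
    case (Suc q)
    have "oct_adj n (famB a b c (s,q)) (famB a b c (Suc s,p))"
      using inV(1)[of p] inV(2)[of q] Suc.prems Suc unfolding oct_adj_def famB_def by (simp add: algebra_simps)
    then show ?thesis using Suc.IH[of q] Suc.prems Suc walk_snoc by fastforce
  qed
qed

lemma famC_walk:
  assumes u: "(a,b,c) \<in> oct_V n"
  shows "s \<le> nat \<bar>c\<bar> \<Longrightarrow> p \<le> s \<Longrightarrow> oct_walk n s (a,b,c) (famC a b c (s,p))"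
proof (induction s arbitrary: p)
  case 0
  then show ?case using u by (simp add: famC_def oct_walk.nil)
next
  case (Suc s)
  have inV: "\<And>q. q \<le> Suc s \<Longrightarrow> famC a b c (Suc s, q) \<in> oct_V n" "\<And>q. q \<le> s \<Longrightarrow> famC a b c (s, q) \<in> oct_V n"
    using u Suc.prems by (auto simp: famC_def oct_V_def)
  show ?case
  proof (cases p)
    case 0
    have "oct_adj n (famC a b c (s,0)) (famC a b c (Suc s,0))"
      using inV[of 0] unfolding oct_adj_def by (auto simp: famC_def)
    then show ?thesis using Suc walk_snoc 0 by fastforce
  next
    case (Suc q)
    have "oct_adj n (famC a b c (s,q)) (famC a b c (Suc s,p))"
      using inV(1)[of p] inV(2)[of q] Suc.prems Suc unfolding oct_adj_def famC_def by (simp add: algebra_simps)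
    then show ?thesis using Suc.IH[of q] Suc.prems Suc walk_snoc by fastforce
  qed
qed


lemma fam_sum:
  fixes F :: "nat \<times> nat \<Rightarrow> pt"
  assumes inj: "inj_on F (Sigma {1..m} (\<lambda>s. {0..s}))"
  and W: "\<And>s p. 1 \<le> s \<Longrightarrow> s \<le> m \<Longrightarrow> p \<le> s \<Longrightarrow> oct_walk n s u (F (s,p)) \<and> F (s,p) \<noteq> u"
  shows "(\<Sum>s\<in>{1..m}. (real s + 1) / (real s)^2) \<le> (\<Sum>w\<in>F ` Sigma {1..m} (\<lambda>s. {0..s}). 1 / (real (oct_dist n u w))^2)"
proof -
  let ?I = "Sigma {1..m} (\<lambda>s. {0..s})"
  have "(\<Sum>s\<in>{1..m}. (real s + 1) / (real s)^2) = (\<Sum>s\<in>{1..m}. \<Sum>p\<in>{0..s}. 1 / (real s)^2)"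
    by (rule sum.cong) (simp_all add: add.commute)
  also have "\<dots> = (\<Sum>x\<in>?I. 1 / (real (fst x))^2)"
    by (subst sum.Sigma) (auto simp: case_prod_beta)
  also have "\<dots> \<le> (\<Sum>x\<in>?I. 1 / (real (oct_dist n u (F x)))^2)"
  proof (rule sum_mono)
    fix x assume x: "x \<in> ?I"
    obtain s p where sp: "x = (s,p)" by (cases x)
    have "1 \<le> s" "s \<le> m" "p \<le> s" using x sp by auto
    then have "oct_walk n s u (F (s,p))" "F (s,p) \<noteq> u" using W by auto
    then have "1 / (real s)^2 \<le> 1 / (real (oct_dist n u (F (s,p))))^2" using g_bound[of n s u "F (s,p)"] by auto
    then show "1 / (real (fst x))^2 \<le> 1 / (real (oct_dist n u (F x)))^2" using sp by simp
  qed
  also have "\<dots> = (\<Sum>w\<in>F ` ?I. 1 / (real (oct_dist n u w))^2)"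
    using sum.reindex[OF inj, of "\<lambda>w. 1 / (real (oct_dist n u w))^2"] by (simp add: comp_def)
  finally show ?thesis .
qed

lemma ln_step: "ln (real m + 2) \<le> ln (real m + 1) + 1 / (real m + 1)"
proof -
  have "ln (real m + 2) - ln (real m + 1) = ln ((real m + 2) / (real m + 1))"
    by (simp add: ln_div)
  also have "\<dots> \<le> (real m + 2) / (real m + 1) - 1" by (rule ln_le_minus_one) auto
  also have "\<dots> = 1 / (real m + 1)" by (simp add: field_simps)
  finally show ?thesis by simp
qed

lemma ln_f: "ln (real m + 1) + (if m \<ge> 1 then 1 else 0) \<le> (\<Sum>s\<in>{1..m}. (real s + 1)/(real s)^2)"
proof (induction m)
  case 0
  then show ?case by simp
next
  case (Suc m)
  show ?case
  proof (cases "m = 0")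
    case True
    have "ln (2::real) \<le> 2 - 1" by (rule ln_le_minus_one) auto
    then show ?thesis using True by simp
  next
    case False
    have IH: "ln (real m + 1) + 1 \<le> (\<Sum>s\<in>{1..m}. (real s + 1)/(real s)^2)" using Suc False by simp
    have a0: "1 / (real m + 1) = (real m + 1) / (real m + 1)^2"
      by (simp add: power2_eq_square)
    have a: "1 / (real m + 1) \<le> (real m + 2) / (real m + 1)^2"
      unfolding a0 by (rule divide_right_mono) auto
    have s1: "(\<Sum>s\<in>{1..Suc m}. (real s + 1)/(real s)^2) = (\<Sum>s\<in>{1..m}. (real s + 1)/(real s)^2) + (real (Suc m) + 1) / (real (Suc m))^2"
      by simp
    have s2: "(real (Suc m) + 1) / (real (Suc m))^2 = (real m + 2) / (real m + 1)^2"
      by (simp add: add.commute)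
    have s3: "ln (real (Suc m) + 1) = ln (real m + 2)" by (simp add: add.commute)
    have s4: "(if 1 \<le> Suc m then 1 else 0) = (1::real)" by simp
    show ?thesis unfolding s1 s2 s3 s4 using IH a ln_step[of m] by linarith
  qed
qed

theorem lemma3:
  fixes n :: nat and u :: pt
  assumes "n \<ge> 1" and "u \<in> oct_V n"
  shows "oct_Z n u < 1 / ln (real n + 1)"
proof -
  obtain a b c where u: "u = (a,b,c)" by (cases u) auto
  have uV: "(a,b,c) \<in> oct_V n" using assms u by simp
  define A where "A = nat \<bar>a\<bar>"
  define B where "B = nat \<bar>b\<bar>"
  define C where "C = nat \<bar>c\<bar>"
  have nABC: "n = A + B + C" using uV by (simp add: oct_V_def A_def B_def C_def; linarith)
  let ?I = "\<lambda>m. Sigma {1..m} (\<lambda>s. {0..s::nat})"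
  let ?g = "\<lambda>w. 1 / (real (oct_dist n u w))^2"
  let ?f = "\<lambda>m. (\<Sum>s\<in>{1..m}. (real s + 1)/(real s)^2)"
  define FA where "FA = famA a b c ` ?I A"
  define FB where "FB = famB a b c ` ?I B"
  define FC where "FC = famC a b c ` ?I C"
  have finV: "finite (oct_V n)"
  proof (rule finite_subset)
    show "oct_V n \<subseteq> {-int n..int n} \<times> {-int n..int n} \<times> {-int n..int n}"
      by (auto simp: oct_V_def)
  qed auto
  have WA: "oct_walk n s u (famA a b c (s,p)) \<and> famA a b c (s,p) \<noteq> u" if "1 \<le> s" "s \<le> A" "p \<le> s" for s p
  proof
    show "oct_walk n s u (famA a b c (s,p))" using famA_walk[OF uV] that u A_def by simp
    have "\<bar>a\<bar> - int s \<noteq> \<bar>a\<bar>" using that by simp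
    then have "sg a * (\<bar>a\<bar> - int s) \<noteq> sg a * \<bar>a\<bar>" by (metis sg_eq)
    then show "famA a b c (s,p) \<noteq> u" using u by (auto simp: famA_def)
  qed
  have WB: "oct_walk n s u (famB a b c (s,p)) \<and> famB a b c (s,p) \<noteq> u" if "1 \<le> s" "s \<le> B" "p \<le> s" for s p
  proof
    show "oct_walk n s u (famB a b c (s,p))" using famB_walk[OF uV] that u B_def by simp
    have "\<bar>b\<bar> - int s \<noteq> \<bar>b\<bar>" using that by simp
    then have "sg b * (\<bar>b\<bar> - int s) \<noteq> sg b * \<bar>b\<bar>" by (metis sg_eq)
    then show "famB a b c (s,p) \<noteq> u" using u by (auto simp: famB_def)
  qed
  have WC: "oct_walk n s u (famC a b c (s,p)) \<and> famC a b c (s,p) \<noteq> u" if "1 \<le> s" "s \<le> C" "p \<le> s" for s p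
  proof
    show "oct_walk n s u (famC a b c (s,p))" using famC_walk[OF uV] that u C_def by simp
    have "\<bar>c\<bar> - int s \<noteq> \<bar>c\<bar>" using that by simp
    then have "sg c * (\<bar>c\<bar> - int s) \<noteq> sg c * \<bar>c\<bar>" by (metis sg_eq)
    then show "famC a b c (s,p) \<noteq> u" using u by (auto simp: famC_def)
  qed
  have injA: "inj_on (famA a b c) (?I A)" by (auto simp: inj_on_def famA_def)
  have injB: "inj_on (famB a b c) (?I B)" by (auto simp: inj_on_def famB_def)
  have injC: "inj_on (famC a b c) (?I C)" by (auto simp: inj_on_def famC_def)
  have SA: "?f A \<le> sum ?g FA" unfolding FA_def by (rule fam_sum[OF injA WA])
  have SB: "?f B \<le> sum ?g FB" unfolding FB_def by (rule fam_sum[OF injB WB])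
  have SC: "?f C \<le> sum ?g FC" unfolding FC_def by (rule fam_sum[OF injC WC])
  have PA: "\<forall>w\<in>FA. \<bar>fst w\<bar> < \<bar>a\<bar> \<and> \<bar>fst (snd w)\<bar> \<ge> \<bar>b\<bar>"
    unfolding FA_def A_def by (auto simp: famA_def)
  have PB: "\<forall>w\<in>FB. \<bar>fst w\<bar> \<ge> \<bar>a\<bar> \<and> \<bar>fst (snd w)\<bar> < \<bar>b\<bar>"
    unfolding FB_def B_def by (auto simp: famB_def)
  have PC: "\<forall>w\<in>FC. \<bar>fst w\<bar> \<ge> \<bar>a\<bar> \<and> \<bar>fst (snd w)\<bar> \<ge> \<bar>b\<bar>"
    unfolding FC_def C_def by (auto simp: famC_def)
  have d1: "FA \<inter> FB = {}"
  proof -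
    have "False" if w: "w \<in> FA" and "w \<in> FB" for w
    proof -
      from that(2) have "\<bar>fst w\<bar> \<ge> \<bar>a\<bar>" using PB by blast
      moreover have "\<bar>fst w\<bar> < \<bar>a\<bar>" using PA w by blast
      ultimately show False by linarith
    qed
    then show ?thesis by blast
  qed
  have d2: "(FA \<union> FB) \<inter> FC = {}"
  proof -
    have "False" if w: "w \<in> FA \<union> FB" and "w \<in> FC" for w
    proof -
      from that(2) have "\<bar>fst w\<bar> \<ge> \<bar>a\<bar>" "\<bar>fst (snd w)\<bar> \<ge> \<bar>b\<bar>" using PC by blast+
      moreover have "\<bar>fst w\<bar> < \<bar>a\<bar> \<or> \<bar>fst (snd w)\<bar> < \<bar>b\<bar>" using PA PB w by blast
      ultimately show False by linarith
    qed
    then show ?thesis by blast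
  qed
  have fins: "finite FA" "finite FB" "finite FC" unfolding FA_def FB_def FC_def by auto
  have subA: "FA \<subseteq> oct_V n - {u}"
  proof
    fix w assume "w \<in> FA"
    then obtain s p where sp: "(s,p) \<in> ?I A" "w = famA a b c (s,p)" unfolding FA_def by blast
    then have "oct_walk n s u w \<and> w \<noteq> u" using WA[of s p] by simp
    then show "w \<in> oct_V n - {u}" using walk_V by blast
  qed
  have subB: "FB \<subseteq> oct_V n - {u}"
  proof
    fix w assume "w \<in> FB"
    then obtain s p where sp: "(s,p) \<in> ?I B" "w = famB a b c (s,p)" unfolding FB_def by blast
    then have "oct_walk n s u w \<and> w \<noteq> u" using WB[of s p] by simp
    then show "w \<in> oct_V n - {u}" using walk_V by blast
  qed
  have subC: "FC \<subseteq> oct_V n - {u}"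
  proof
    fix w assume "w \<in> FC"
    then obtain s p where sp: "(s,p) \<in> ?I C" "w = famC a b c (s,p)" unfolding FC_def by blast
    then have "oct_walk n s u w \<and> w \<noteq> u" using WC[of s p] by simp
    then show "w \<in> oct_V n - {u}" using walk_V by blast
  qed
  have sub: "FA \<union> FB \<union> FC \<subseteq> oct_V n - {u}" using subA subB subC by blast
  have "sum ?g FA + sum ?g FB + sum ?g FC = sum ?g (FA \<union> FB \<union> FC)"
    using fins d1 d2 by (simp add: sum.union_disjoint)
  also have "\<dots> \<le> sum ?g (oct_V n - {u})"
    by (rule sum_mono2[OF _ sub]) (use finV in auto)
  finally have Sge: "?f A + ?f B + ?f C \<le> sum ?g (oct_V n - {u})" using SA SB SC by linarith
  have lA: "ln (real A + 1) + (if A \<ge> 1 then 1 else 0) \<le> ?f A" by (rule ln_f)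
  have lB: "ln (real B + 1) + (if B \<ge> 1 then 1 else 0) \<le> ?f B" by (rule ln_f)
  have lC: "ln (real C + 1) + (if C \<ge> 1 then 1 else 0) \<le> ?f C" by (rule ln_f)
  have one: "1 \<le> (if A \<ge> 1 then 1 else 0) + (if B \<ge> 1 then 1 else 0) + (if C \<ge> 1 then (1::real) else 0)"
    using assms(1) nABC by auto
  have prod: "real n + 1 \<le> (real A + 1) * (real B + 1) * (real C + 1)"
  proof -
    have "n + 1 \<le> (A + 1) * (B + 1) * (C + 1)" using nABC by (simp add: algebra_simps)
    then have "real (n + 1) \<le> real ((A + 1) * (B + 1) * (C + 1))" by linarith
    then show ?thesis by (simp only: of_nat_add of_nat_mult of_nat_1)
  qed
  have "ln (real n + 1) \<le> ln ((real A + 1) * (real B + 1) * (real C + 1))"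
    using prod by simp
  also have "\<dots> = ln (real A + 1) + ln (real B + 1) + ln (real C + 1)"
    by (simp add: ln_mult)
  finally have lnle: "ln (real n + 1) < sum ?g (oct_V n - {u})"
    using Sge lA lB lC one by linarith
  have lnpos: "0 < ln (real n + 1)" using assms(1) by simp
  have "inverse (sum ?g (oct_V n - {u})) < inverse (ln (real n + 1))"
    by (rule less_imp_inverse_less[OF lnle lnpos])
  then show ?thesis unfolding oct_Z_def by (simp only: inverse_eq_divide)
qed

end
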